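(* For $t\ge0$ let $C_t:=\binom{2t}{t}2^t$ and for $t\ge1$ let $D_t:=\sum_{j=0}^{t-1}U(3t,j)-\sum_{j\ge t+1}U(3t,j)$. Then $\displaystyle\lim_{t\to\infty}\frac{D_t}{C_t}=\frac19$.
   Context: For integers $m,j$, $U(m,j):=\binom{m-j}{j}2^j$ if $0\le j$ and $2j\le m$, and $U(m,j):=0$ otherwise. *)

theory Defs
  imports Complex_Main
begin

definition U :: "int \<Rightarrow> int \<Rightarrow> int" where
  "U m j = (if 0 \<le> j \<and> 2 * j \<le> m then int (nat (m - j) choose nat j) * 2 ^ nat j else 0)"

definition C :: "nat \<Rightarrow> int" where
  "C t = int ((2 * t) choose t) * 2 ^ t"

text \<open>The infinite sum over j \<ge> t+1 has only finitely many nonzero terms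
 (U(3t,j) = 0 for 2j > 3t), so it is written as a finite sum over j in {t+1..3t}.\<close>
definition D :: "nat \<Rightarrow> int" where
  "D t = (\<Sum>j\<in>{0..int t - 1}. U (3 * int t) j) - (\<Sum>j\<in>{int t + 1..3 * int t}. U (3 * int t) j)"

end

theory Submission
  imports Defs
begin

definition u :: "nat \<Rightarrow> nat \<Rightarrow> int" where
  "u m j = int ((m - j) choose j) * 2 ^ j"

definition f :: "nat \<Rightarrow> nat \<Rightarrow> int" where
  "f m a = (\<Sum>j<a. u m j)"

definition T :: "nat \<Rightarrow> int" where
  "T m = f m (Suc m)"

definition h :: "nat \<Rightarrow> nat \<Rightarrow> int" where
  "h m a = f m a + f m (Suc a) - T m"

lemma u_zero: "m < 2 * j \<Longrightarrow> u m j = 0"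
  by (simp add: u_def binomial_eq_0)

lemma u_pascal: "u (Suc (Suc m)) (Suc j) = u (Suc m) (Suc j) + 2 * u m j"
proof (cases "j \<le> m")
  case True
  then have "Suc (Suc m) - Suc j = Suc (m - j)" "Suc m - Suc j = m - j" by auto
  then show ?thesis by (simp add: u_def algebra_simps)
next
  case False
  then show ?thesis by (simp add: u_def)
qed

lemma u_0: "u m 0 = 1" by (simp add: u_def)

lemma f_rec: "f (Suc (Suc m)) (Suc a) = f (Suc m) (Suc a) + 2 * f m a"
  unfolding f_def sum.lessThan_Suc_shift
  by (simp add: u_pascal u_0 sum.distrib sum_distrib_left)

lemma f_full: assumes "Suc m \<le> a" shows "f m a = T m"
proof -
  have "(\<Sum>j<a. u m j) = (\<Sum>j<Suc m. u m j)"
    by (rule sum.mono_neutral_right) (use assms in \<open>auto intro!: u_zero\<close>)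
  then show ?thesis by (simp add: f_def T_def)
qed

lemma T_rec: "T (Suc (Suc m)) = T (Suc m) + 2 * T m"
proof -
  have "T (Suc (Suc m)) = f (Suc (Suc m)) (Suc (Suc (Suc m)))" by (simp add: T_def)
  also have "\<dots> = f (Suc m) (Suc (Suc (Suc m))) + 2 * f m (Suc (Suc m))" by (rule f_rec)
  also have "\<dots> = T (Suc m) + 2 * T m" by (simp add: f_full)
  finally show ?thesis .
qed

lemma h_rec: "h (Suc (Suc m)) (Suc a) = h (Suc m) (Suc a) + 2 * h m a"
  unfolding h_def using f_rec[of m a] f_rec[of m "Suc a"] T_rec[of m] by simp

lemma h_step: "h m (Suc a) = h m a + u m a + u m (Suc a)"
  unfolding h_def f_def by simp

definition p :: "nat \<Rightarrow> int" where "p t = u (3*t+1) t + u (3*t+1) (t+1)"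
definition q :: "nat \<Rightarrow> int" where "q t = u (3*t+2) t + u (3*t+2) (t+1)"

lemma binom_facts:
  fixes t :: nat
  shows "(t+1) * ((2*t+1) choose (t+1)) = (2*t+1) * ((2*t) choose t)"
    and "(2*t+1) choose (t+1) = ((2*t) choose t) + ((2*t) choose (t+1))"
    and "(2*t+1) choose t = (2*t+1) choose (t+1)"
    and "(2*t+2) choose (t+1) = 2 * ((2*t+1) choose (t+1))"
    and "(t+2) * ((2*t+2) choose (t+2)) = (2*t+2) * ((2*t+1) choose (t+1))"
    and "(2*t+2) choose t = (2*t+2) choose (t+2)"
    and "(t+2) * ((2*t+3) choose (t+2)) = (2*t+3) * ((2*t+2) choose (t+1))"
    and "(2*t+3) choose (t+1) = (2*t+3) choose (t+2)"
proof -
  show "(t+1) * ((2*t+1) choose (t+1)) = (2*t+1) * ((2*t) choose t)"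
    using Suc_times_binomial_eq[of "2*t" t] by simp
  show "(2*t+1) choose (t+1) = ((2*t) choose t) + ((2*t) choose (t+1))" by simp
  show s: "(2*t+1) choose t = (2*t+1) choose (t+1)"
    using binomial_symmetric[of t "2*t+1"] by (simp add: Suc_diff_le)
  show "(2*t+2) choose (t+1) = 2 * ((2*t+1) choose (t+1))"
    using s by (simp add: numeral_eq_Suc)
  show "(t+2) * ((2*t+2) choose (t+2)) = (2*t+2) * ((2*t+1) choose (t+1))"
    using Suc_times_binomial_eq[of "2*t+1" "t+1"] by (simp add: numeral_eq_Suc)
  show "(2*t+2) choose t = (2*t+2) choose (t+2)"
    using binomial_symmetric[of t "2*t+2"] by (simp add: numeral_eq_Suc)
  show "(t+2) * ((2*t+3) choose (t+2)) = (2*t+3) * ((2*t+2) choose (t+1))"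
    using Suc_times_binomial_eq[of "2*t+2" "t+1"] by (simp add: numeral_eq_Suc)
  show "(2*t+3) choose (t+1) = (2*t+3) choose (t+2)"
    using binomial_symmetric[of "t+1" "2*t+3"] by (simp add: numeral_eq_Suc)
qed

lemma key_identity:
  "u (3*t+3) (t+1) - p (t+1) = 8 * u (3*t) t + 4 * p t - 6 * q t"
proof -
  define c where "c = int ((2*t) choose t)"
  define a1 where "a1 = int ((2*t+1) choose (t+1))"
  define a2 where "a2 = int ((2*t) choose (t+1))"
  define a3 where "a3 = int ((2*t+2) choose (t+1))"
  define a4 where "a4 = int ((2*t+2) choose (t+2))"
  define a5 where "a5 = int ((2*t+3) choose (t+2))"
  note bf = binom_facts[of t]
  have e1: "(int t+1) * a1 = (2*int t+1) * c" unfolding a1_def c_def using arg_cong[OF bf(1), of int] by (simp add: algebra_simps del: binomial_Suc_Suc)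
  have e2: "a2 = a1 - c" unfolding a1_def a2_def c_def using bf(2) by simp
  have e3: "int ((2*t+1) choose t) = a1" unfolding a1_def using bf(3) by simp
  have e4: "a3 = 2 * a1" unfolding a3_def a1_def using bf(4) by simp
  have e5: "(int t+2) * a4 = (2*int t+2) * a1" unfolding a4_def a1_def using arg_cong[OF bf(5), of int] by (simp add: algebra_simps del: binomial_Suc_Suc)
  have e6: "int ((2*t+2) choose t) = a4" unfolding a4_def using bf(6) by simp
  have e7: "(int t+2) * a5 = (2*int t+3) * a3" unfolding a5_def a3_def using arg_cong[OF bf(7), of int] by (simp add: algebra_simps del: binomial_Suc_Suc)
  have e8: "int ((2*t+3) choose (t+1)) = a5" unfolding a5_def using bf(8) by simp
  have L: "u (3*t+3) (t+1) - p (t+1) = 2^t * (2*a3 - 2*a5 - 4*a4)"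
  proof -
    have "3*t+3-(t+1) = 2*t+2" "3*(t+1)+1 - (t+1) = 2*t+3" "3*(t+1)+1 - (t+1+1) = 2*t+2" by auto
    then show ?thesis unfolding p_def u_def a3_def e8[symmetric] a4_def
      by (simp add: algebra_simps numeral_eq_Suc del: binomial_Suc_Suc)
  qed
  have R: "8 * u (3*t) t + 4 * p t - 6 * q t = 2^t * (8*c + 4*a1 + 8*a2 - 6*a4 - 12*a1)"
  proof -
    have "3*t-t = 2*t" "3*t+1 - t = 2*t+1" "3*t+1 - (t+1) = 2*t" "3*t+2-t = 2*t+2" "3*t+2-(t+1) = 2*t+1" by auto
    then show ?thesis unfolding p_def q_def u_def c_def a2_def e3[symmetric] e6[symmetric] a1_def
      using bf(3) by (simp add: algebra_simps del: binomial_Suc_Suc)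
  qed
  have "(int t+2) * (2*a3 - 2*a5 - 4*a4) = (int t+2) * (8*c + 4*a1 + 8*a2 - 6*a4 - 12*a1)"
  proof -
    have "(int t+2) * (2*a3 - 2*a5 - 4*a4) = (int t + 2)*2*a3 - 2*((int t+2)*a5) - 4*((int t+2)*a4)"
      by (simp add: algebra_simps)
    also have "\<dots> = (int t + 2)*4*a1 - 2*((2*int t+3) * (2*a1)) - 4*((2*int t+2) * a1)"
      using e4 e5 e7 by simp
    also have "\<dots> = -6 * ((2*int t+2) * a1)" by (simp add: algebra_simps)
    also have "\<dots> = -6 * ((int t+2) * a4)" using e5 by simp
    also have "\<dots> = (int t+2) * (8*c + 4*a1 + 8*a2 - 6*a4 - 12*a1)" by (simp add: e2 algebra_simps)
    finally show ?thesis .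
  qed
  then have "2*a3 - 2*a5 - 4*a4 = 8*c + 4*a1 + 8*a2 - 6*a4 - 12*a1" by simp
  then show ?thesis using L R by simp
qed

lemma AB_rel:
  shows "h (3*(t+1)) (t+1) = 3 * h (3*t+1) t + 2 * h (3*t) t + p t"
    and "h (3*(t+1)+1) (t+1) = 5 * h (3*t+1) t + 6 * h (3*t) t + 3 * p t - 2 * q t"
proof -
  have r1: "h (3*t+3) (t+1) = h (3*t+2) (t+1) + 2 * h (3*t+1) t"
    using h_rec[of "3*t+1" t] by (simp add: numeral_eq_Suc)
  have r2: "h (3*t+2) (t+1) = h (3*t+1) (t+1) + 2 * h (3*t) t"
    using h_rec[of "3*t" t] by (simp add: numeral_eq_Suc)
  have r3: "h (3*t+1) (t+1) = h (3*t+1) t + u (3*t+1) t + u (3*t+1) (t+1)"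
    using h_step[of "3*t+1" t] by simp
  have r4: "h (3*t+4) (t+1) = h (3*t+3) (t+1) + 2 * h (3*t+2) t"
    using h_rec[of "3*t+2" t] by (simp add: numeral_eq_Suc)
  have r5: "h (3*t+2) (t+1) = h (3*t+2) t + u (3*t+2) t + u (3*t+2) (t+1)"
    using h_step[of "3*t+2" t] by simp
  have e: "3*(t+1) = 3*t+3" "3*(t+1)+1 = 3*t+4" by auto
  show "h (3*(t+1)) (t+1) = 3 * h (3*t+1) t + 2 * h (3*t) t + p t"
    unfolding e(1) p_def using r1 r2 r3 by linarith
  show "h (3*(t+1)+1) (t+1) = 5 * h (3*t+1) t + 6 * h (3*t) t + 3 * p t - 2 * q t"
    unfolding e(2) p_def q_def using r1 r2 r3 r4 r5 by (simp add: algebra_simps)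
qed

lemma inv: "3 * (h (3*t+1) t + h (3*t) t) = u (3*t) t - p t"
proof (induction t)
  case 0
  show ?case by (simp add: h_def f_def T_def p_def u_def)
next
  case (Suc t)
  have "3 * (h (3*Suc t+1) (Suc t) + h (3*Suc t) (Suc t))
      = 8 * (3 * (h (3*t+1) t + h (3*t) t)) + 12 * p t - 6 * q t"
    using AB_rel[of t] by simp
  also have "\<dots> = u (3*t+3) (t+1) - p (t+1)" using Suc.IH key_identity[of t] by simp
  finally show ?case by (simp add: numeral_eq_Suc)
qed

lemma A_rel: "h (3*(t+1)) (t+1) + h (3*t) t = u (3*t) t"
  using AB_rel(1)[of t] inv[of t] by simp

lemma U_u: "U (int m) (int j) = u m j"
proof (cases "2*j \<le> m")
  case True
  then have "nat (int m - int j) = m - j" by auto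
  then show ?thesis using True by (simp add: U_def u_def)
next
  case False
  then show ?thesis by (simp add: U_def u_zero)
qed

lemma D_eq: "D t = h (3*t) t"
proof -
  have i1: "{0..int t - 1} = int ` {..<t}" (is "?L = ?R")
  proof (intro set_eqI iffI)
    fix x assume "x \<in> ?L" then show "x \<in> ?R" by (intro image_eqI[where x="nat x"]) auto
  qed auto
  have i2: "{int t + 1..3 * int t} = int ` {t+1..3*t}" (is "?L = ?R")
  proof (intro set_eqI iffI)
    fix x assume "x \<in> ?L" then show "x \<in> ?R" by (intro image_eqI[where x="nat x"]) auto
  qed auto
  have s1: "(\<Sum>j\<in>{0..int t - 1}. U (3 * int t) j) = f (3*t) t"
    unfolding i1 f_def by (simp add: sum.reindex U_u[symmetric])
  have s2: "(\<Sum>j\<in>{int t + 1..3 * int t}. U (3 * int t) j) = (\<Sum>j\<in>{t+1..3*t}. u (3*t) j)"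
    unfolding i2 by (simp add: sum.reindex U_u[symmetric])
  have e: "{..<Suc (3*t)} = {..<t+1} \<union> {t+1..3*t}" by auto
  have "sum (u (3*t)) ({..<t+1} \<union> {t+1..3*t}) = sum (u (3*t)) {..<t+1} + sum (u (3*t)) {t+1..3*t}"
    by (rule sum.union_disjoint) auto
  then have "T (3*t) = f (3*t) (t+1) + (\<Sum>j\<in>{t+1..3*t}. u (3*t) j)"
    unfolding T_def f_def e by simp
  then show ?thesis unfolding D_def h_def s1 s2 by simp
qed

lemma C_eq: "C t = u (3*t) t"
proof -
  have "3*t - t = 2*t" by simp
  then show ?thesis by (simp add: C_def u_def)
qed

lemma D_rec: "D (t+1) + D t = C t"
  using A_rel[of t] by (simp add: D_eq C_eq)

lemma C_rec: "(real t + 1) * real_of_int (C (t+1)) = 4 * (2 * real t + 1) * real_of_int (C t)"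
proof -
  have a: "(t+1) * ((2*t+1) choose (t+1)) = (2*t+1) * ((2*t) choose t)"
    and b: "(2*t+2) choose (t+1) = 2 * ((2*t+1) choose (t+1))" using binom_facts[of t] by auto
  have "(t+1) * ((2*(t+1)) choose (t+1)) = 2 * ((2*t+1) * ((2*t) choose t))"
    using a b by (simp add: algebra_simps del: binomial_Suc_Suc)
  then have "(real t+1) * real ((2*(t+1)) choose (t+1)) = 2 * ((2*real t+1) * real ((2*t) choose t))"
    by (metis (mono_tags, lifting) of_nat_1 of_nat_add of_nat_mult of_nat_numeral)
  then have "2 * 2^t * ((real t+1) * real ((2*(t+1)) choose (t+1))) = 2 * 2^t * (2 * ((2*real t+1) * real ((2*t) choose t)))"
    by simp
  then show ?thesis unfolding C_def by (simp add: algebra_simps del: binomial_Suc_Suc)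
qed

lemma C_pos: "real_of_int (C t) > 0"
  unfolding C_def by simp

definition r :: "nat \<Rightarrow> real" where "r t = real_of_int (D t) / real_of_int (C t)"

lemma r_rec: "r (t+1) = (1 - r t) * ((real t + 1) / (4 * (2 * real t + 1)))"
proof -
  have cp: "real_of_int (C t) > 0" "real_of_int (C (t+1)) > 0" using C_pos by auto
  have C1: "real_of_int (C (t+1)) = 4 * (2 * real t + 1) * real_of_int (C t) / (real t + 1)"
    using C_rec[of t] by (simp add: field_simps)
  have D1: "real_of_int (D (t+1)) = real_of_int (C t) - real_of_int (D t)"
    using D_rec[of t] by (simp add: algebra_simps flip: of_int_add)
  show ?thesis unfolding r_def C1 D1 using cp by (simp add: field_simps)
qed

lemma r_bound: "\<bar>r t - 1/9\<bar> \<le> 1 / (real t + 1)"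
proof (induction t)
  case 0
  show ?case by (simp add: r_def D_def C_def)
next
  case (Suc t)
  define y where "y = r t - 1/9"
  define \<rho> where "\<rho> = (real t + 1) / (4 * (2 * real t + 1))"
  have rho: "0 \<le> \<rho>" by (simp add: \<rho>_def)
  have y: "\<bar>y\<bar> \<le> 1 / (real t + 1)" using Suc.IH by (simp add: y_def)
  have rs: "r (Suc t) = (1 - r t) * \<rho>" using r_rec[of t] by (simp add: \<rho>_def)
  have rr: "8/9*\<rho> - 1/9 = 1 / (9 * (2 * real t + 1))" by (simp add: \<rho>_def field_simps)
  have "r (Suc t) - 1/9 = - \<rho> * y + (8/9*\<rho> - 1/9)"
    unfolding rs y_def by (simp add: algebra_simps)
  then have "r (Suc t) - 1/9 = - \<rho> * y + 1 / (9 * (2 * real t + 1))" using rr by simp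
  moreover have "\<bar>- \<rho> * y + 1 / (9 * (2 * real t + 1))\<bar> \<le> \<bar>- \<rho> * y\<bar> + \<bar>1 / (9 * (2 * real t + 1))\<bar>"
    by (rule abs_triangle_ineq)
  moreover have "\<bar>- \<rho> * y\<bar> = \<rho> * \<bar>y\<bar>" using rho by (simp add: abs_mult)
  moreover have "\<bar>1 / (9 * (2 * real t + 1))\<bar> = 1 / (9 * (2 * real t + 1))" by simp
  ultimately have "\<bar>r (Suc t) - 1/9\<bar> \<le> \<rho> * \<bar>y\<bar> + 1 / (9 * (2 * real t + 1))"
    by simp
  also have "\<dots> \<le> \<rho> * (1 / (real t + 1)) + 1 / (9 * (2 * real t + 1))"
    using mult_left_mono[OF y rho] by simp
  also have "\<dots> = 13 / (36 * (2 * real t + 1))"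
  proof -
    have a: "\<rho> * (1 / (real t + 1)) = 1 / (4 * (2 * real t + 1))"
      unfolding \<rho>_def by (simp add: field_simps)
    have g: "\<And>b::real. b > 0 \<Longrightarrow> 1/(4*b) + 1/(9*b) = 13/(36*b)" by (simp add: field_simps)
    show ?thesis unfolding a by (rule g) simp
  qed
  also have "\<dots> \<le> 1 / (real (Suc t) + 1)"
    by (simp add: field_simps)
  finally show ?case .
qed

theorem mainTheorem15:
  shows "(\<lambda>t. real_of_int (D t) / real_of_int (C t)) \<longlonglongrightarrow> 1 / 9"
proof -
  have lim0: "(\<lambda>t. 1 / (real t + 1)) \<longlonglongrightarrow> 0"
    using LIMSEQ_inverse_real_of_nat by (simp add: inverse_eq_divide add.commute)
  have l1: "(\<lambda>t. 1/9 - 1 / (real t + 1)) \<longlonglongrightarrow> 1/9"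
    using tendsto_diff[OF tendsto_const lim0, of "1/9::real"] by simp
  have l2: "(\<lambda>t. 1/9 + 1 / (real t + 1)) \<longlonglongrightarrow> 1/9"
    using tendsto_add[OF tendsto_const lim0, of "1/9::real"] by simp
  have "r \<longlonglongrightarrow> 1/9"
  proof (rule tendsto_sandwich[OF _ _ l1 l2])
    show "\<forall>\<^sub>F t in sequentially. 1/9 - 1 / (real t + 1) \<le> r t"
      using r_bound by (simp add: abs_le_iff algebra_simps)
    show "\<forall>\<^sub>F t in sequentially. r t \<le> 1/9 + 1 / (real t + 1)"
      using r_bound by (simp add: abs_le_iff algebra_simps)
  qed
  then show ?thesis unfolding r_def .
qed

end
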